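(* Let $C$ be a Clifford system of rank $m+1$ on $\mathbb{R}^{2l}$ with $l>m+1$. If the Clifford foliation $(\mathbb{S}^{2l-1},\mathcal{F}_C)$ is homogeneous, then the FKM isoparametric foliation $(\mathbb{S}^{2l-1},\mathcal{F}'_C)$ is homogeneous as well.
   Context: A Clifford system $C$ of rank $m+1$ ($m\ge1$) on $\mathbb{R}^{2l}$, with the standard inner product, is an $(m+1)$-dimensional linear subspace $\mathbb{R}_C$ of the symmetric endomorphisms of $\mathbb{R}^{2l}$. It must admit a basis $P_0,\dots,P_m$ with $P_i^2=\mathrm{Id}$ and $P_iP_j=-P_jP_i$ for $i\ne j$, orthonormal for $\langle A,B\rangle=\frac1{2l}\mathrm{tr}(AB)$. The map $\pi_C$ is $\pi_C(x)=\sum_i\langle P_ix,x\rangle P_i$ on $\mathbb{S}^{2l-1}$. The Clifford foliation $\mathcal{F}_C$ is the partition of $\mathbb{S}^{2l-1}$ into fibers of $\pi_C$. The FKM foliation $\mathcal{F}'_C$ is the partition of $\mathbb{S}^{2l-1}$ into the sets $\{x:\|\pi_C(x)\|=r\}$, $r\in[0,1]$. Equivalently, these are the level sets of $F(x)=1-2\sum_{i}\langle P_ix,x\rangle^2$. A foliation is homogeneous if its leaves are the orbits of an isometric action of a connected Lie group (here a closed subgroup of $\mathrm{SO}(2l)$). *)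

theory Defs
  imports "HOL-Analysis.Analysis"
begin

definition cl_inner :: "real^'n^'n \<Rightarrow> real^'n^'n \<Rightarrow> real" where
  "cl_inner A B = trace (A ** B) / real CARD('n)"

definition cl_norm :: "real^'n^'n \<Rightarrow> real" where
  "cl_norm A = sqrt (cl_inner A A)"

definition clifford_system :: "nat \<Rightarrow> (nat \<Rightarrow> real^'n^'n) \<Rightarrow> bool" where
  "clifford_system m P \<longleftrightarrow>
     (\<forall>i\<le>m. transpose (P i) = P i) \<and>
     (\<forall>i\<le>m. P i ** P i = mat 1) \<and>
     (\<forall>i\<le>m. \<forall>j\<le>m. i \<noteq> j \<longrightarrow> P i ** P j = - (P j ** P i)) \<and>
     (\<forall>i\<le>m. \<forall>j\<le>m. cl_inner (P i) (P j) = (if i = j then 1 else 0))"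

definition pi_C :: "nat \<Rightarrow> (nat \<Rightarrow> real^'n^'n) \<Rightarrow> real^'n \<Rightarrow> real^'n^'n" where
  "pi_C m P x = (\<Sum>i\<le>m. ((P i *v x) \<bullet> x) *\<^sub>R P i)"

definition clifford_leaf :: "nat \<Rightarrow> (nat \<Rightarrow> real^'n^'n) \<Rightarrow> real^'n \<Rightarrow> (real^'n) set" where
  "clifford_leaf m P x = {y \<in> sphere 0 1. pi_C m P y = pi_C m P x}"

definition fkm_leaf :: "nat \<Rightarrow> (nat \<Rightarrow> real^'n^'n) \<Rightarrow> real^'n \<Rightarrow> (real^'n) set" where
  "fkm_leaf m P x = {y \<in> sphere 0 1. cl_norm (pi_C m P y) = cl_norm (pi_C m P x)}"

definition homogeneous_foliation :: "(real^'n \<Rightarrow> (real^'n) set) \<Rightarrow> bool" where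
  "homogeneous_foliation L \<longleftrightarrow>
     (\<exists>G :: (real^'n^'n) set.
        G \<subseteq> Collect rotation_matrix \<and> closed G \<and> connected G \<and>
        mat 1 \<in> G \<and> (\<forall>A\<in>G. \<forall>B\<in>G. A ** B \<in> G) \<and> (\<forall>A\<in>G. matrix_inv A \<in> G) \<and>
        (\<forall>x\<in>sphere 0 1. (\<lambda>A. A *v x) ` G = L x))"

end

theory Submission
  imports Defs
begin


lemma cont_mv: "continuous_on U (\<lambda>A::real^'n^'m. A *v x)"
proof -
  have "(\<lambda>A::real^'n^'m. A *v x) = (\<lambda>A. \<chi> i. \<Sum>j\<in>UNIV. A$i$j * x$j)"
    by (auto simp: matrix_vector_mult_def)
  then show ?thesis by (simp only:) (auto intro!: continuous_intros)
qed

lemma cont_sumprod: "continuous_on U (f:: 'a::topological_space \<Rightarrow> real^'n^'n) \<Longrightarrow> continuous_on U g \<Longrightarrow> continuous_on U (\<lambda>x. \<Sum>j\<in>UNIV. f x $ i $ j * g x $ j $ k)"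
  apply (rule continuous_on_sum)
  apply (rule continuous_on_mult)
  apply (rule continuous_on_component, rule continuous_on_component, assumption)+
  done

lemma cont_mm: "continuous_on U (\<lambda>A. f A ** g A)" if "continuous_on U (f:: 'a::topological_space \<Rightarrow> real^'n^'n)" "continuous_on U g"
proof -
  have "(\<lambda>A. f A ** g A) = (\<lambda>A. \<chi> i k. \<Sum>j\<in>UNIV. f A$i$j * g A$j$k)"
    by (auto simp: matrix_matrix_mult_def)
  then show ?thesis using cont_sumprod[OF that] by (simp only:) (intro continuous_on_vec_lambda)
qed

lemma cont_tr: "continuous_on U (\<lambda>A::real^'n^'n. transpose A)"
  unfolding transpose_def by (auto intro!: continuous_intros)

lemma cont_det: "continuous_on U (\<lambda>A::real^'n^'n. det A)"
  unfolding det_def by (auto intro!: continuous_intros)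



lemma neg_mm: "(- A) ** (B::real^'n^'n) = - (A ** B)" "A ** (- B) = - (A ** B)"
  by (simp_all add: matrix_matrix_mult_def vec_eq_iff sum_negf)

lemma diff_mm: "(A - B) ** (C::real^'n^'n) = A ** C - B ** C" "C ** (A - B) = C ** A - C ** B"
  by (simp_all add: matrix_matrix_mult_def vec_eq_iff sum_subtractf algebra_simps)

lemma add_mm: "(A + B) ** (C::real^'n^'n) = A ** C + B ** C"
  by (simp add: matrix_matrix_mult_def vec_eq_iff sum.distrib algebra_simps)

lemma Q_conj: "((M *v (A *v x)) \<bullet> (A *v x)) = (((transpose A ** M ** A) *v x) \<bullet> (x::real^'n))"
proof -
  have "((transpose A ** M ** A) *v x) \<bullet> x = (transpose A *v ((M ** A) *v x)) \<bullet> x"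
    by (simp add: matrix_vector_mul_assoc matrix_mul_assoc)
  also have "\<dots> = ((M ** A) *v x) \<bullet> (A *v x)"
    by (simp only: transpose_matrix_vector dot_lmul_matrix)
  finally show ?thesis by (simp add: matrix_vector_mul_assoc inner_commute)
qed

lemma neg_mv: "(- M) *v x = - (M *v (x::real^'n))"
  by (simp add: matrix_vector_mult_def vec_eq_iff sum_negf)

lemma Q_skew: "transpose M = - M \<Longrightarrow> ((M *v x) \<bullet> (x::real^'n)) = 0"
proof -
  assume h: "transpose M = - M"
  have "(M *v x) \<bullet> x = x \<bullet> (M *v x)" by (simp add: inner_commute)
  also have "\<dots> = (x v* M) \<bullet> x" by (simp only: dot_lmul_matrix)
  also have "\<dots> = (transpose M *v x) \<bullet> x" by simp
  also have "\<dots> = - ((M *v x) \<bullet> x)" using h by (simp add: neg_mv)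
  finally show ?thesis by simp
qed

lemma Q_lin: "(((a *\<^sub>R M + b *\<^sub>R N) *v x) \<bullet> (x::real^'n)) = a * ((M *v x) \<bullet> x) + b * ((N *v x) \<bullet> x)"
  by (simp add: matrix_vector_mult_add_rdistrib scaleR_matrix_vector_assoc[symmetric] inner_add_left)



lemma transpose_add: "transpose (A + B) = transpose A + transpose (B::real^'n^'n)"
  by (simp add: transpose_def vec_eq_iff)
lemma transpose_neg: "transpose (- A) = - transpose (A::real^'n^'n)"
  by (simp add: transpose_def vec_eq_iff)

lemma conj_expand:
  fixes J M :: "real^'n^'n"
  assumes tJ: "transpose J = - J"
  shows "transpose (c *\<^sub>R mat 1 + s *\<^sub>R J) ** M ** (c *\<^sub>R mat 1 + s *\<^sub>R J)
     = (c * c) *\<^sub>R M + (c * s) *\<^sub>R (M ** J - J ** M) - (s * s) *\<^sub>R (J ** M ** J)"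
proof -
  have t: "transpose (c *\<^sub>R mat 1 + s *\<^sub>R J) = c *\<^sub>R mat 1 - s *\<^sub>R J"
    by (simp add: transpose_add transpose_scalar tJ)
  show ?thesis unfolding t
    by (simp add: add_mm diff_mm matrix_add_ldistrib scalar_matrix_assoc[symmetric] matrix_scalar_ac
         matrix_mul_assoc algebra_simps)
qed

lemma Q_expand:
  fixes J M :: "real^'n^'n"
  assumes tJ: "transpose J = - J"
  shows "(M *v ((c *\<^sub>R mat 1 + s *\<^sub>R J) *v x)) \<bullet> ((c *\<^sub>R mat 1 + s *\<^sub>R J) *v x)
     = (c * c) * ((M *v x) \<bullet> x) + (c * s) * (((M ** J - J ** M) *v x) \<bullet> x) - (s * s) * (((J ** M ** J) *v x) \<bullet> x)"
  unfolding Q_conj conj_expand[OF tJ]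
  by (simp add: matrix_vector_mult_add_rdistrib matrix_vector_mult_diff_rdistrib scaleR_matrix_vector_assoc[symmetric] inner_add_left inner_diff_left)



definition cq :: "(nat \<Rightarrow> real^'n^'n) \<Rightarrow> nat \<Rightarrow> real^'n \<Rightarrow> real" where
  "cq P k x = (P k *v x) \<bullet> x"

definition Rot :: "(nat \<Rightarrow> real^'n^'n) \<Rightarrow> nat \<Rightarrow> nat \<Rightarrow> real \<Rightarrow> real^'n^'n" where
  "Rot P i j t = cos t *\<^sub>R mat 1 + sin t *\<^sub>R (P i ** P j)"

lemma cl_inner_sum_left: "finite I \<Longrightarrow> cl_inner (\<Sum>l\<in>I. f l) B = (\<Sum>l\<in>I. cl_inner (f l) B)"
  by (induction I rule: finite_induct) (simp_all add: cl_inner_def add_mm trace_add add_divide_distrib trace_0[unfolded mat_0])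

lemma cl_inner_sum_right: "finite I \<Longrightarrow> cl_inner B (\<Sum>l\<in>I. f l) = (\<Sum>l\<in>I. cl_inner B (f l))"
  by (induction I rule: finite_induct) (simp_all add: cl_inner_def matrix_add_ldistrib trace_add add_divide_distrib trace_0[unfolded mat_0])

lemma cl_inner_scale: "cl_inner (a *\<^sub>R A) B = a * cl_inner A B" "cl_inner B (a *\<^sub>R A) = a * cl_inner B A"
  by (simp_all add: cl_inner_def scalar_matrix_assoc[symmetric] matrix_scalar_ac trace_def sum_distrib_left)

context
  fixes m :: nat and P :: "nat \<Rightarrow> real^'n^'n"
  assumes cs: "clifford_system m P"
begin

lemma Psym: "a \<le> m \<Longrightarrow> transpose (P a) = P a" using cs unfolding clifford_system_def by blast
lemma Psq: "a \<le> m \<Longrightarrow> P a ** P a = mat 1" using cs unfolding clifford_system_def by blast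
lemma Pac: "a \<le> m \<Longrightarrow> b \<le> m \<Longrightarrow> a \<noteq> b \<Longrightarrow> P a ** P b = - (P b ** P a)" using cs unfolding clifford_system_def by blast
lemma Porth: "a \<le> m \<Longrightarrow> b \<le> m \<Longrightarrow> cl_inner (P a) (P b) = (if a = b then 1 else 0)" using cs unfolding clifford_system_def by blast

lemma inner_i: assumes "i \<le> m" shows "cl_inner (P i) (pi_C m P x) = cq P i x"
proof -
  have "cl_inner (P i) (pi_C m P x) = (\<Sum>j\<le>m. cq P j x * cl_inner (P i) (P j))"
    unfolding pi_C_def cq_def by (simp only: cl_inner_sum_right finite_atMost cl_inner_scale)
  also have "\<dots> = (\<Sum>j\<le>m. if j = i then cq P i x else 0)"
    using assms by (intro sum.cong) (auto simp: Porth)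
  also have "\<dots> = cq P i x" using assms by simp
  finally show ?thesis .
qed

lemma clnorm_pi: "cl_norm (pi_C m P x) = sqrt (\<Sum>i\<le>m. (cq P i x)^2)"
proof -
  have "cl_inner (pi_C m P x) (pi_C m P x) = (\<Sum>i\<le>m. cq P i x * cl_inner (P i) (pi_C m P x))"
    unfolding pi_C_def[of m P x] cq_def by (simp only: cl_inner_sum_left finite_atMost cl_inner_scale)
  also have "\<dots> = (\<Sum>i\<le>m. (cq P i x)^2)"
    by (intro sum.cong) (auto simp: inner_i power2_eq_square)
  finally show ?thesis by (simp add: cl_norm_def)
qed

lemma tJ: "i \<le> m \<Longrightarrow> j \<le> m \<Longrightarrow> i \<noteq> j \<Longrightarrow> transpose (P i ** P j) = - (P i ** P j)"
  by (simp add: matrix_transpose_mul Psym Pac[of j i])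

lemma JJ: assumes "i \<le> m" "j \<le> m" "i \<noteq> j" shows "P i ** P j ** (P i ** P j) = - mat 1"
proof -
  have e: "P j ** P i = - (P i ** P j)" using Pac[of j i] assms by simp
  have "P i ** P j ** (P i ** P j) = P i ** ((P j ** P i) ** P j)" by (simp only: matrix_mul_assoc)
  also have "\<dots> = - (P i ** ((P i ** P j) ** P j))" by (simp only: e neg_mm)
  also have "\<dots> = - ((P i ** P i) ** (P j ** P j))" by (simp only: matrix_mul_assoc)
  also have "\<dots> = - mat 1" using assms by (simp only: Psq matrix_mul_lid)
  finally show ?thesis .
qed

lemma PiJ: assumes "i \<le> m" "j \<le> m" "i \<noteq> j" shows "P i ** (P i ** P j) = P j" "(P i ** P j) ** P i = - P j"
proof -
  have e: "P j ** P i = - (P i ** P j)" using Pac[of j i] assms by simp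
  show "P i ** (P i ** P j) = P j" using assms by (simp only: matrix_mul_assoc Psq matrix_mul_lid)
  have "(P i ** P j) ** P i = P i ** (P j ** P i)" by (simp only: matrix_mul_assoc)
  also have "\<dots> = - ((P i ** P i) ** P j)" by (simp only: e neg_mm matrix_mul_assoc)
  finally show "(P i ** P j) ** P i = - P j" using assms by (simp only: Psq matrix_mul_lid)
qed

lemma PjJ: assumes "i \<le> m" "j \<le> m" "i \<noteq> j" shows "P j ** (P i ** P j) = - P i" "(P i ** P j) ** P j = P i"
proof -
  have e: "P j ** P i = - (P i ** P j)" using Pac[of j i] assms by simp
  show "(P i ** P j) ** P j = P i" using assms by (simp only: matrix_mul_assoc[symmetric] Psq matrix_mul_rid)
  have "P j ** (P i ** P j) = (P j ** P i) ** P j" by (simp only: matrix_mul_assoc)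
  also have "\<dots> = - (P i ** (P j ** P j))" by (simp only: e neg_mm matrix_mul_assoc)
  finally show "P j ** (P i ** P j) = - P i" using assms by (simp only: Psq matrix_mul_rid)
qed

lemma PkJ: assumes "i \<le> m" "j \<le> m" "k \<le> m" "i \<noteq> j" "k \<noteq> i" "k \<noteq> j"
  shows "P k ** (P i ** P j) = (P i ** P j) ** P k"
proof -
  have e1: "P k ** P i = - (P i ** P k)" using Pac[of k i] assms by simp
  have e2: "P k ** P j = - (P j ** P k)" using Pac[of k j] assms by simp
  have "P k ** (P i ** P j) = (P k ** P i) ** P j" by (simp only: matrix_mul_assoc)
  also have "\<dots> = - (P i ** (P k ** P j))" by (simp only: e1 neg_mm matrix_mul_assoc)
  also have "\<dots> = P i ** (P j ** P k)" by (simp only: e2 neg_mm minus_minus)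
  finally show ?thesis by (simp only: matrix_mul_assoc)
qed

lemma Q_neg_x: "((- M) *v x) \<bullet> x = - ((M *v x) \<bullet> (x::real^'n))"
  by (simp add: neg_mv)

lemma Q_add: "((M + N) *v x) \<bullet> x = ((M *v x) \<bullet> x) + ((N *v (x::real^'n)) \<bullet> x)"
  by (simp add: matrix_vector_mult_add_rdistrib inner_add_left)

end

context
  fixes m :: nat and P :: "nat \<Rightarrow> real^'n^'n"
  assumes cs: "clifford_system m P"
begin

lemma Rot_k: assumes "i \<le> m" "j \<le> m" "k \<le> m" "i \<noteq> j" "k \<noteq> i" "k \<noteq> j"
  shows "cq P k (Rot P i j t *v x) = cq P k x"
proof -
  have a: "P k ** (P i ** P j) - (P i ** P j) ** P k = 0" using PkJ[OF cs assms] by simp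
  have b: "(P i ** P j) ** P k ** (P i ** P j) = - P k"
  proof -
    have "(P i ** P j) ** P k ** (P i ** P j) = (P k ** (P i ** P j)) ** (P i ** P j)" by (simp only: PkJ[OF cs assms])
    also have "\<dots> = P k ** ((P i ** P j) ** (P i ** P j))" by (simp only: matrix_mul_assoc)
    finally show ?thesis using assms by (simp add: JJ[OF cs] neg_mm)
  qed
  have s: "cos t * cos t + sin t * sin t = 1" by (rule sin_cos_squared_add3)
  have "cq P k (Rot P i j t *v x) = cos t * (cos t * cq P k x) + sin t * (sin t * cq P k x)"
    unfolding cq_def Rot_def Q_expand[OF tJ[OF cs assms(1,2,4)]] a b
    by (simp add: neg_mv algebra_simps)
  also have "\<dots> = (cos t * cos t + sin t * sin t) * cq P k x" by (simp only: distrib_right mult.assoc)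
  finally show ?thesis using s by simp
qed

lemma Rot_i: assumes "i \<le> m" "j \<le> m" "i \<noteq> j"
  shows "cq P i (Rot P i j t *v x) = (cos t * cos t - sin t * sin t) * cq P i x + (2 * cos t * sin t) * cq P j x"
proof -
  have a: "P i ** (P i ** P j) - (P i ** P j) ** P i = P j + P j" using PiJ[OF cs assms] by simp
  have b: "(P i ** P j) ** P i ** (P i ** P j) = P i"
    using assms by (simp add: PiJ[OF cs assms] neg_mm PjJ[OF cs assms])
  show ?thesis unfolding cq_def Rot_def Q_expand[OF tJ[OF cs assms]] a b
    by (simp only: Q_add[OF cs]) (simp add: algebra_simps)
qed

lemma Rot_j: assumes "i \<le> m" "j \<le> m" "i \<noteq> j"
  shows "cq P j (Rot P i j t *v x) = (cos t * cos t - sin t * sin t) * cq P j x - (2 * cos t * sin t) * cq P i x"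
proof -
  have a: "P j ** (P i ** P j) - (P i ** P j) ** P j = - (P i + P i)" using PjJ[OF cs assms] by simp
  have b: "(P i ** P j) ** P j ** (P i ** P j) = P j"
    using assms by (simp add: PiJ[OF cs assms] PjJ[OF cs assms])
  show ?thesis unfolding cq_def Rot_def Q_expand[OF tJ[OF cs assms]] a b
    by (simp only: Q_add[OF cs] Q_neg_x[OF cs]) (simp add: algebra_simps)
qed

end


lemma rot_sq_id: fixes c s a b :: real assumes "c * c + s * s = 1"
  shows "((c * c - s * s) * a + (2 * c * s) * b)^2 + ((c * c - s * s) * b - (2 * c * s) * a)^2 = a^2 + b^2"
proof -
  have e: "((c * c - s * s) * a + (2 * c * s) * b)^2 + ((c * c - s * s) * b - (2 * c * s) * a)^2
     = (c * c + s * s)^2 * (a^2 + b^2)" by algebra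
  show ?thesis unfolding e assms by simp
qed

lemma two_times_mat: "2 * (A::real^'n^'n) = (2::real) *\<^sub>R A"
  by (simp add: vec_eq_iff)

context
  fixes m :: nat and P :: "nat \<Rightarrow> real^'n^'n"
  assumes cs: "clifford_system m P"
begin

lemma Rot_orth: assumes "i \<le> m" "j \<le> m" "i \<noteq> j" shows "orthogonal_matrix (Rot P i j t)"
proof -
  have "transpose (Rot P i j t) ** Rot P i j t = transpose (Rot P i j t) ** mat 1 ** Rot P i j t" by simp
  also have "\<dots> = (cos t * cos t) *\<^sub>R mat 1 + (sin t * sin t) *\<^sub>R mat 1"
    unfolding Rot_def conj_expand[OF tJ[OF cs assms]] by (simp add: JJ[OF cs assms])
  also have "\<dots> = mat 1" by (simp add: scaleR_left_distrib[symmetric] sin_cos_squared_add3)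
  finally show ?thesis by (simp add: orthogonal_matrix)
qed

lemma Rot_double: assumes "i \<le> m" "j \<le> m" "i \<noteq> j" shows "Rot P i j (2 * u) = Rot P i j u ** Rot P i j u"
proof -
  have "Rot P i j u ** Rot P i j u = (cos u * cos u) *\<^sub>R mat 1 + (cos u * sin u) *\<^sub>R (P i ** P j) + (cos u * sin u) *\<^sub>R (P i ** P j) + (sin u * sin u) *\<^sub>R (P i ** P j ** (P i ** P j))"
    unfolding Rot_def by (simp add: add_mm matrix_add_ldistrib scalar_matrix_assoc[symmetric] matrix_scalar_ac two_times_mat scaleR_add_right scaleR_scaleR algebra_simps)
  also have "\<dots> = Rot P i j (2 * u)"
    unfolding Rot_def JJ[OF cs assms] cos_double sin_double
    by (simp add: algebra_simps power2_eq_square two_times_mat)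
  finally show ?thesis by simp
qed

lemma Rot_rot: assumes "i \<le> m" "j \<le> m" "i \<noteq> j" shows "rotation_matrix (Rot P i j t)"
proof -
  have "det (Rot P i j t) = det (Rot P i j (t/2)) * det (Rot P i j (t/2))"
    using Rot_double[OF assms, of "t/2"] by (simp add: det_mul)
  moreover have "det (Rot P i j (t/2)) = 1 \<or> det (Rot P i j (t/2)) = -1"
    by (rule det_orthogonal_matrix[OF Rot_orth[OF assms]])
  ultimately have "det (Rot P i j t) = 1" by auto
  then show ?thesis using Rot_orth[OF assms] by (simp add: rotation_matrix_def)
qed

lemma Rot_norm: assumes "i \<le> m" "j \<le> m" "i \<noteq> j"
  shows "cl_norm (pi_C m P (Rot P i j t *v x)) = cl_norm (pi_C m P x)"
proof -
  let ?y = "Rot P i j t *v x"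
  have fin: "finite {..m}" by simp
  have split: "(\<Sum>k\<le>m. f k) = f i + f j + (\<Sum>k\<in>{..m} - {i} - {j}. f k)" for f :: "nat \<Rightarrow> real"
    using assms by (simp add: sum.remove[OF fin, of i] sum.remove[of "{..m} - {i}" j])
  have rest: "(\<Sum>k\<in>{..m} - {i} - {j}. (cq P k ?y)^2) = (\<Sum>k\<in>{..m} - {i} - {j}. (cq P k x)^2)"
    using assms by (intro sum.cong) (auto simp: Rot_k[OF cs])
  have ij: "(cq P i ?y)^2 + (cq P j ?y)^2 = (cq P i x)^2 + (cq P j x)^2"
    unfolding Rot_i[OF cs assms] Rot_j[OF cs assms] by (rule rot_sq_id[OF sin_cos_squared_add3])
  show ?thesis unfolding clnorm_pi[OF cs] split[of "\<lambda>k. (cq P k ?y)^2"] split[of "\<lambda>k. (cq P k x)^2"] rest ij ..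
qed

lemma Rot_cont: "continuous_on U (Rot P i j)"
  unfolding Rot_def by (intro continuous_intros)

lemma Rot_0: "Rot P i j 0 = mat 1" by (simp add: Rot_def)

end


lemma orth_inner: "orthogonal_matrix A \<Longrightarrow> (A *v x) \<bullet> (A *v x) = x \<bullet> (x::real^'n)"
  using Q_conj[of "mat 1" A x] by (simp add: orthogonal_matrix inner_commute)

lemma orth_norm: "orthogonal_matrix A \<Longrightarrow> norm (A *v x) = norm (x::real^'n)"
  by (simp add: norm_eq_sqrt_inner orth_inner)

lemma matrix_inv_orth: assumes "orthogonal_matrix (A::real^'n^'n)" shows "matrix_inv A = transpose A"
proof -
  have o: "transpose A ** A = mat 1" "A ** transpose A = mat 1" using assms by (auto simp: orthogonal_matrix_def)
  have ex: "\<exists>B. A ** B = mat 1 \<and> B ** A = mat 1" using o by blast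
  have "A ** matrix_inv A = mat 1 \<and> matrix_inv A ** A = mat 1"
    unfolding matrix_inv_def by (rule someI_ex[OF ex])
  then have i: "matrix_inv A ** A = mat 1" by simp
  have "matrix_inv A = matrix_inv A ** (A ** transpose A)" using o by simp
  also have "\<dots> = (matrix_inv A ** A) ** transpose A" by (simp only: matrix_mul_assoc)
  finally show ?thesis using i by simp
qed

lemma cont_mv2: "continuous_on U f \<Longrightarrow> continuous_on U (\<lambda>x. (M::real^'n^'m) *v f x)"
  using continuous_on_compose[of U f "(*v) M"] matrix_vector_mult_linear_continuous_on[of "f ` U" M]
  by (simp add: o_def)

definition stab :: "nat \<Rightarrow> (nat \<Rightarrow> real^'n^'n) \<Rightarrow> (real^'n^'n) set" where
  "stab m P = {A. rotation_matrix A \<and> (\<forall>x\<in>sphere 0 1. cl_norm (pi_C m P (A *v x)) = cl_norm (pi_C m P x))}"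

context
  fixes m :: nat and P :: "nat \<Rightarrow> real^'n^'n"
  assumes cs: "clifford_system m P"
begin

lemma stab_closed: "closed (stab m P)"
proof -
  have eq: "stab m P = {A. transpose A ** A = mat 1} \<inter> {A. det A = 1} \<inter>
     (\<Inter>x\<in>sphere 0 1. {A. sqrt (\<Sum>i\<le>m. (cq P i (A *v x))^2) = cl_norm (pi_C m P x)})"
    unfolding stab_def rotation_matrix_def orthogonal_matrix clnorm_pi[OF cs, symmetric] by auto
  have c1: "closed {A::real^'n^'n. transpose A ** A = mat 1}"
    by (rule closed_Collect_eq) (intro cont_mm cont_tr continuous_on_id, rule continuous_on_const)
  have c2: "closed {A::real^'n^'n. det A = 1}"
    by (rule closed_Collect_eq) (intro cont_det, rule continuous_on_const)
  have c3: "closed {A::real^'n^'n. sqrt (\<Sum>i\<le>m. (cq P i (A *v x))^2) = cl_norm (pi_C m P x)}" for x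
  proof (rule closed_Collect_eq)
    have "continuous_on UNIV (\<lambda>A::real^'n^'n. A *v x)" by (rule cont_mv)
    then show "continuous_on UNIV (\<lambda>A::real^'n^'n. sqrt (\<Sum>i\<le>m. (cq P i (A *v x))^2))"
      unfolding cq_def by (intro continuous_intros cont_mv2) auto
  qed (rule continuous_on_const)
  show ?thesis unfolding eq using c1 c2 c3 by (intro closed_Int closed_INT) auto
qed

lemma stab_id: "mat 1 \<in> stab m P"
  by (simp add: stab_def rotation_matrix_def orthogonal_matrix_id)

lemma stab_sphere: "A \<in> stab m P \<Longrightarrow> x \<in> sphere 0 1 \<Longrightarrow> A *v x \<in> sphere 0 1"
  by (simp add: stab_def rotation_matrix_def orth_norm)

lemma stab_mul: assumes "A \<in> stab m P" "B \<in> stab m P" shows "A ** B \<in> stab m P"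
proof -
  have "rotation_matrix (A ** B)" using assms
    by (simp add: stab_def rotation_matrix_def orthogonal_matrix_mul det_mul)
  moreover have "cl_norm (pi_C m P ((A ** B) *v x)) = cl_norm (pi_C m P x)" if "x \<in> sphere 0 1" for x
  proof -
    have "B *v x \<in> sphere 0 1" using stab_sphere[OF assms(2) that] .
    then show ?thesis using assms that by (simp add: stab_def matrix_vector_mul_assoc[symmetric])
  qed
  ultimately show ?thesis by (simp add: stab_def)
qed

lemma stab_tr: assumes "A \<in> stab m P" shows "transpose A \<in> stab m P"
proof -
  have o: "orthogonal_matrix A" "det A = 1" using assms by (auto simp: stab_def rotation_matrix_def)
  then have oo: "A ** transpose A = mat 1" by (simp add: orthogonal_matrix_def)
  have "rotation_matrix (transpose A)" using o by (simp add: rotation_matrix_def)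
  moreover have "cl_norm (pi_C m P (transpose A *v x)) = cl_norm (pi_C m P x)" if "x \<in> sphere 0 1" for x
  proof -
    have s: "transpose A *v x \<in> sphere 0 1" using that o orth_norm[of "transpose A" x] by (simp del: transpose_matrix_vector)
    have "A *v (transpose A *v x) = x" by (simp only: matrix_vector_mul_assoc oo matrix_vector_mul_lid)
    moreover have "cl_norm (pi_C m P (A *v (transpose A *v x))) = cl_norm (pi_C m P (transpose A *v x))"
      using assms s unfolding stab_def by blast
    ultimately show ?thesis by simp
  qed
  ultimately show ?thesis by (simp add: stab_def)
qed

lemma Rot_stab: assumes "i \<le> m" "j \<le> m" "i \<noteq> j" shows "Rot P i j t \<in> stab m P"
  using Rot_rot[OF cs assms] Rot_norm[OF cs assms] by (simp add: stab_def)

end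


context
  fixes m :: nat and P :: "nat \<Rightarrow> real^'n^'n"
  assumes cs: "clifford_system m P"
begin

abbreviation "CC \<equiv> connected_component_set (stab m P) (mat 1)"

lemma CC_sub: "CC \<subseteq> stab m P" by (rule connected_component_subset)
lemma CC_id: "mat 1 \<in> CC" by (simp add: stab_id[OF cs])
lemma CC_closed: "closed CC" by (rule closed_connected_component[OF stab_closed[OF cs]])
lemma CC_conn: "connected CC" by (rule connected_connected_component)

lemma CC_mul: assumes "A \<in> CC" "B \<in> CC" shows "A ** B \<in> CC"
proof -
  let ?T = "(\<lambda>B. A ** B) ` CC"
  have ct: "connected ?T"
    by (rule connected_continuous_image[OF _ CC_conn]) (intro cont_mm continuous_on_const continuous_on_id)
  have AT: "A \<in> ?T" using CC_id by (metis image_eqI matrix_mul_rid)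
  have TS: "?T \<subseteq> stab m P" using assms CC_sub stab_mul[OF cs] by auto
  have "connected (?T \<union> CC)" using ct CC_conn AT assms(1) by (intro connected_Un) auto
  moreover have "?T \<union> CC \<subseteq> stab m P" using TS CC_sub by auto
  ultimately have "?T \<union> CC \<subseteq> CC" using CC_id by (intro connected_component_maximal) auto
  then show ?thesis using assms(2) by auto
qed

lemma CC_tr: assumes "A \<in> CC" shows "transpose A \<in> CC"
proof -
  have "connected (transpose ` CC)" by (rule connected_continuous_image[OF cont_tr CC_conn])
  moreover have "transpose ` CC \<subseteq> stab m P" using CC_sub stab_tr[OF cs] by auto
  moreover have "mat 1 \<in> transpose ` CC" using CC_id by (metis image_eqI transpose_mat)
  ultimately have "transpose ` CC \<subseteq> CC" by (intro connected_component_maximal)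
  then show ?thesis using assms by auto
qed

lemma Rot_CC: assumes "i \<le> m" "j \<le> m" "i \<noteq> j" shows "Rot P i j t \<in> CC"
proof -
  have "connected (range (Rot P i j))" by (rule connected_continuous_image[OF Rot_cont[OF cs] connected_UNIV])
  moreover have "range (Rot P i j) \<subseteq> stab m P" using Rot_stab[OF cs assms] by auto
  moreover have "mat 1 \<in> range (Rot P i j)" using Rot_0[OF cs] by (metis rangeI)
  ultimately have "range (Rot P i j) \<subseteq> CC" by (intro connected_component_maximal)
  then show ?thesis by auto
qed

lemma step: assumes "1 \<le> j" "j \<le> m"
  shows "\<exists>Q\<in>CC. cq P 0 (Q *v w) \<ge> 0 \<and> cq P j (Q *v w) = 0 \<and> (\<forall>k\<le>m. k \<noteq> 0 \<and> k \<noteq> j \<longrightarrow> cq P k (Q *v w) = cq P k w)"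
proof -
  define a where "a = cq P 0 w"
  define b where "b = cq P j w"
  define r where "r = sqrt (a^2 + b^2)"
  show ?thesis
  proof (cases "r = 0")
    case True
    then have "a = 0" "b = 0" unfolding r_def by (auto simp: add_nonneg_eq_0_iff)
    then show ?thesis using CC_id unfolding a_def b_def by (intro bexI[of _ "mat 1"]) auto
  next
    case False
    have "r \<ge> 0" unfolding r_def by simp
    then have rp: "r > 0" using False by simp
    have r2: "r^2 = a^2 + b^2" unfolding r_def by simp
    have pos: "r^2 > 0" using rp by simp
    have "(a/r)^2 + (b/r)^2 = (a^2 + b^2) / r^2" by (simp add: power_divide add_divide_distrib)
    also have "\<dots> = 1" using pos r2 by (metis divide_self less_irrefl)
    finally have "(a/r)^2 + (b/r)^2 = 1" .
    then obtain phi where ph: "a/r = cos phi" "b/r = sin phi" by (rule sincos_total_2pi)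
    define t where "t = phi / 2"
    have c2: "cos t * cos t - sin t * sin t = a / r"
      using cos_double[of t] ph by (simp add: t_def power2_eq_square)
    have s2: "2 * cos t * sin t = b / r"
      using sin_double[of t] ph by (simp add: t_def mult_ac)
    have ij: "0 \<le> m" "0 \<noteq> j" using assms by auto
    let ?Q = "Rot P 0 j t"
    have "cq P 0 (?Q *v w) = (a/r) * a + (b/r) * b"
      using Rot_i[OF cs ij(1) assms(2) ij(2), of t w] c2 s2 by (simp add: a_def b_def)
    also have "\<dots> = r" using rp r2 by (simp add: field_simps power2_eq_square)
    finally have e0: "cq P 0 (?Q *v w) = r" .
    have "cq P j (?Q *v w) = (a/r) * b - (b/r) * a"
      using Rot_j[OF cs ij(1) assms(2) ij(2), of t w] c2 s2 by (simp add: a_def b_def)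
    then have ej: "cq P j (?Q *v w) = 0" by simp
    have ek: "\<forall>k\<le>m. k \<noteq> 0 \<and> k \<noteq> j \<longrightarrow> cq P k (?Q *v w) = cq P k w"
      using Rot_k[OF cs ij(1) assms(2)] ij by auto
    show ?thesis using Rot_CC[OF ij(1) assms(2) ij(2)] e0 ej ek rp by (intro bexI[of _ ?Q]) auto
  qed
qed

end


context
  fixes m :: nat and P :: "nat \<Rightarrow> real^'n^'n"
  assumes cs: "clifford_system m P"
begin

lemma zero_n: assumes "1 \<le> m"
  shows "n \<le> m \<Longrightarrow> \<exists>R\<in>CC m P. cq P 0 (R *v z) \<ge> 0 \<and> (\<forall>k. 1 \<le> k \<and> k \<le> n \<longrightarrow> cq P k (R *v z) = 0)"
proof (induction n)
  case 0
  obtain Q where "Q \<in> CC m P" "cq P 0 (Q *v z) \<ge> 0" using step[OF cs order.refl assms, of z] by blast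
  then show ?case by auto
next
  case (Suc n)
  then obtain R where R: "R \<in> CC m P" "cq P 0 (R *v z) \<ge> 0" "\<forall>k. 1 \<le> k \<and> k \<le> n \<longrightarrow> cq P k (R *v z) = 0"
    by auto
  obtain Q where Q: "Q \<in> CC m P" "cq P 0 (Q *v (R *v z)) \<ge> 0" "cq P (Suc n) (Q *v (R *v z)) = 0"
    "\<forall>k\<le>m. k \<noteq> 0 \<and> k \<noteq> Suc n \<longrightarrow> cq P k (Q *v (R *v z)) = cq P k (R *v z)"
    using step[OF cs _ Suc.prems, of "R *v z"] by auto
  have "Q ** R \<in> CC m P" using CC_mul[OF cs Q(1) R(1)] .
  moreover have "cq P k ((Q ** R) *v z) = 0" if "1 \<le> k" "k \<le> Suc n" for k
  proof (cases "k = Suc n")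
    case True then show ?thesis using Q(3) by (simp add: matrix_vector_mul_assoc[symmetric])
  next
    case False then show ?thesis using Q(4) R(3) that Suc.prems by (simp add: matrix_vector_mul_assoc[symmetric])
  qed
  moreover have "cq P 0 ((Q ** R) *v z) \<ge> 0" using Q(2) by (simp add: matrix_vector_mul_assoc[symmetric])
  ultimately show ?case by blast
qed

lemma normal_form: assumes "1 \<le> m" "z \<in> sphere 0 1"
  shows "\<exists>R\<in>CC m P. \<forall>k\<le>m. cq P k (R *v z) = (if k = 0 then cl_norm (pi_C m P z) else 0)"
proof -
  obtain R where R: "R \<in> CC m P" "cq P 0 (R *v z) \<ge> 0" "\<forall>k. 1 \<le> k \<and> k \<le> m \<longrightarrow> cq P k (R *v z) = 0"
    using zero_n[OF assms(1) order.refl, of z] by blast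
  have "R \<in> stab m P" using R(1) CC_sub[OF cs] by auto
  then have "cl_norm (pi_C m P (R *v z)) = cl_norm (pi_C m P z)" using assms(2) by (simp add: stab_def)
  moreover have "(\<Sum>k\<le>m. (cq P k (R *v z))^2) = (\<Sum>k\<le>m. if k = 0 then (cq P 0 (R *v z))^2 else 0)"
    using R(3) by (intro sum.cong) auto
  then have "(\<Sum>k\<le>m. (cq P k (R *v z))^2) = (cq P 0 (R *v z))^2" by simp
  ultimately have "cl_norm (pi_C m P z) = cq P 0 (R *v z)"
    using R(2) clnorm_pi[OF cs, of "R *v z"] by simp
  then show ?thesis using R by (intro bexI[of _ R]) auto
qed

end

theorem proposition5p1:
  fixes m l :: nat and P :: "nat \<Rightarrow> real^'n^'n"
  assumes "m \<ge> 1"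
    and "CARD('n) = 2 * l"
    and "l > m + 1"
    and "clifford_system m P"
    and "homogeneous_foliation (clifford_leaf m P)"
  shows "homogeneous_foliation (fkm_leaf m P)"
proof -
  note cs = assms(4)
  obtain G :: "(real^'n^'n) set" where G: "G \<subseteq> Collect rotation_matrix" "connected G" "mat 1 \<in> G"
    "\<forall>x\<in>sphere 0 1. (\<lambda>A. A *v x) ` G = clifford_leaf m P x"
    using assms(5) unfolding homogeneous_foliation_def by blast
  have GS: "G \<subseteq> stab m P"
  proof
    fix A assume A: "A \<in> G"
    have "pi_C m P (A *v x) = pi_C m P x" if "x \<in> sphere 0 1" for x
    proof -
      have "A *v x \<in> clifford_leaf m P x" using G(4) that A by blast
      then show ?thesis by (simp add: clifford_leaf_def)
    qed
    then show "A \<in> stab m P" using A G(1) by (auto simp: stab_def)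
  qed
  have GC: "G \<subseteq> CC m P" using G(2,3) GS by (intro connected_component_maximal)
  have orbit: "(\<lambda>A. A *v x) ` CC m P = fkm_leaf m P x" if x: "x \<in> sphere 0 1" for x
  proof
    show "(\<lambda>A. A *v x) ` CC m P \<subseteq> fkm_leaf m P x"
    proof
      fix y assume "y \<in> (\<lambda>A. A *v x) ` CC m P"
      then obtain A where A: "A \<in> CC m P" "y = A *v x" by blast
      then have "A \<in> stab m P" using CC_sub[OF cs] by auto
      then show "y \<in> fkm_leaf m P x" using A x stab_sphere[OF cs] by (auto simp: fkm_leaf_def stab_def)
    qed
  next
    show "fkm_leaf m P x \<subseteq> (\<lambda>A. A *v x) ` CC m P"
    proof
      fix y assume y: "y \<in> fkm_leaf m P x"
      then have ys: "y \<in> sphere 0 1" and yn: "cl_norm (pi_C m P y) = cl_norm (pi_C m P x)"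
        by (auto simp: fkm_leaf_def)
      obtain R1 where R1: "R1 \<in> CC m P" "\<forall>k\<le>m. cq P k (R1 *v x) = (if k = 0 then cl_norm (pi_C m P x) else 0)"
        using normal_form[OF cs assms(1) x] by blast
      obtain R2 where R2: "R2 \<in> CC m P" "\<forall>k\<le>m. cq P k (R2 *v y) = (if k = 0 then cl_norm (pi_C m P y) else 0)"
        using normal_form[OF cs assms(1) ys] by blast
      have "pi_C m P (R2 *v y) = pi_C m P (R1 *v x)"
        unfolding pi_C_def using R1(2) R2(2) yn by (intro sum.cong) (auto simp: cq_def)
      moreover have s1: "R1 *v x \<in> sphere 0 1" using R1(1) CC_sub[OF cs] stab_sphere[OF cs] x by auto
      moreover have "R2 *v y \<in> sphere 0 1" using R2(1) CC_sub[OF cs] stab_sphere[OF cs] ys by auto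
      ultimately have "R2 *v y \<in> clifford_leaf m P (R1 *v x)" by (simp add: clifford_leaf_def)
      then obtain g where g: "g \<in> G" "R2 *v y = g *v (R1 *v x)" using G(4) s1 by blast
      have o2: "transpose R2 ** R2 = mat 1" using R2(1) CC_sub[OF cs]
        by (auto simp: stab_def rotation_matrix_def orthogonal_matrix)
      have "y = transpose R2 *v (R2 *v y)"
        by (simp only: matrix_vector_mul_assoc o2 matrix_vector_mul_lid)
      also have "\<dots> = (transpose R2 ** g ** R1) *v x" using g(2) by (simp only: matrix_vector_mul_assoc matrix_mul_assoc)
      finally have "y = (transpose R2 ** g ** R1) *v x" .
      moreover have "transpose R2 ** g ** R1 \<in> CC m P"
        using CC_mul[OF cs CC_mul[OF cs CC_tr[OF cs R2(1)] subsetD[OF GC g(1)]] R1(1)] .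
      ultimately show "y \<in> (\<lambda>A. A *v x) ` CC m P" by blast
    qed
  qed
  have rot: "CC m P \<subseteq> Collect rotation_matrix" using CC_sub[OF cs] by (auto simp: stab_def)
  have inv: "\<forall>A\<in>CC m P. matrix_inv A \<in> CC m P"
  proof
    fix A assume A: "A \<in> CC m P"
    then have "orthogonal_matrix A" using rot by (auto simp: rotation_matrix_def)
    then have "matrix_inv A = transpose A" by (rule matrix_inv_orth)
    then show "matrix_inv A \<in> CC m P" using CC_tr[OF cs A] by simp
  qed
  have mul: "\<forall>A\<in>CC m P. \<forall>B\<in>CC m P. A ** B \<in> CC m P" using CC_mul[OF cs] by blast
  have orb: "\<forall>x\<in>sphere 0 1. (\<lambda>A. A *v x) ` CC m P = fkm_leaf m P x" using orbit by blast
  show ?thesis unfolding homogeneous_foliation_def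
    by (rule exI[of _ "CC m P"], intro conjI rot CC_closed[OF cs] CC_conn[OF cs] CC_id[OF cs] mul inv orb)
qed


end
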